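(* Let $(X,d_X)$ be a proper, doubling metric space and $p\in X$. Assume there is an open neighborhood $V$ of $p$ such that $X$ is uniformly comparable $\eta$-self-quasisymmetric at the points of a dense subset of $V$. Then $X$ admits an $\eta'$-quasisymmetric embedding into every weak tangent in $WT_p(X)$, where $\eta'(t)=1/\eta^{-1}(1/t)$.
   Context: $\eta$ is a homeomorphism of $[0,\infty)$; a homeomorphism $f$ (onto its image) is $\eta$-quasisymmetric if $d(f(x),f(y))/d(f(x),f(z))\le\eta(d(x,y)/d(x,z))$ for $x\ne z$. $X$ is comparable $\eta$-self-quasisymmetric at $x$ if there are $r_x>0$ and $C_x>0$ such that for every $0<r<r_x$ there is a subset $U\subset B(x,r)$ with $x\in U$, $r/C_x\le\operatorname{diam}U\le C_xr$, and an $\eta$-quasisymmetric homeomorphism from $U$ onto $X$. It is uniformly comparable $\eta$-self-quasisymmetric on a set $A$ if this holds for all $x\in A$ with constants $r_x=r_0$ and $C_x=C$ independent of $x$. Proper: closed balls compact; doubling: every set of diameter $d$ covered by a bounded number of sets of diameter $\le d/2$. A weak tangent of $X$ at $p$ is a pointed Gromov–Hausdorff limit of $(X,p_n,d_X/\lambda_n)$ with $\lambda_n\to0^+$, $p_n\to p$ (pointed GH convergence $(X_n,p_n,d_n)\to(Z,z,d)$, $Z$ complete: for every $r,\varepsilon>0$, for large $n$ there is a map $g:B(p_n,r)\to Z$, $g(p_n)=z$, additive distortion $<\varepsilon$, and $B(z,r-\varepsilon)$ in the $\varepsilon$-neighborhood of $g(B(p_n,r))$); $WT_p(X)$ is the set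 of weak tangents at $p$. *)

theory Defs
  imports "HOL-Analysis.Analysis"
begin

definition distortion_fn :: "(real \<Rightarrow> real) \<Rightarrow> bool" where
  "distortion_fn eta \<longleftrightarrow> (\<exists>g. homeomorphism {0..} {0..} eta g)"

definition dual_distortion :: "(real \<Rightarrow> real) \<Rightarrow> real \<Rightarrow> real" where
  "dual_distortion eta t = 1 / inv_into {0..} eta (1 / t)"

definition quasisymmetric_on ::
  "'a set \<Rightarrow> ('a \<Rightarrow> 'a \<Rightarrow> real) \<Rightarrow> 'b set \<Rightarrow> ('b \<Rightarrow> 'b \<Rightarrow> real) \<Rightarrow>
   (real \<Rightarrow> real) \<Rightarrow> 'a set \<Rightarrow> ('a \<Rightarrow> 'b) \<Rightarrow> bool" where
  "quasisymmetric_on X1 d1 X2 d2 eta U f \<longleftrightarrow>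
     U \<subseteq> X1 \<and> f ` U \<subseteq> X2 \<and>
     homeomorphic_map (subtopology (Metric_space.mtopology X1 d1) U)
                      (subtopology (Metric_space.mtopology X2 d2) (f ` U)) f \<and>
     (\<forall>x\<in>U. \<forall>y\<in>U. \<forall>z\<in>U. x \<noteq> z \<longrightarrow>
        d2 (f x) (f y) / d2 (f x) (f z) \<le> eta (d1 x y / d1 x z))"

definition mdiam :: "('a \<Rightarrow> 'a \<Rightarrow> real) \<Rightarrow> 'a set \<Rightarrow> real" where
  "mdiam d S = Sup {d x y | x y. x \<in> S \<and> y \<in> S}"

definition unif_comp_self_qs ::
  "'a set \<Rightarrow> ('a \<Rightarrow> 'a \<Rightarrow> real) \<Rightarrow> (real \<Rightarrow> real) \<Rightarrow> 'a set \<Rightarrow> bool" where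
  "unif_comp_self_qs X d eta A \<longleftrightarrow>
     (\<exists>r0 C. r0 > 0 \<and> C > 0 \<and>
        (\<forall>x\<in>A. \<forall>r. 0 < r \<and> r < r0 \<longrightarrow>
           (\<exists>U. U \<subseteq> Metric_space.mball X d x r \<and> x \<in> U \<and>
                r / C \<le> mdiam d U \<and> mdiam d U \<le> C * r \<and>
                (\<exists>f. quasisymmetric_on X d X d eta U f \<and> f ` U = X))))"

definition proper_mspace :: "'a set \<Rightarrow> ('a \<Rightarrow> 'a \<Rightarrow> real) \<Rightarrow> bool" where
  "proper_mspace X d \<longleftrightarrow>
     (\<forall>x r. compactin (Metric_space.mtopology X d) (Metric_space.mcball X d x r))"

definition doubling_mspace :: "'a set \<Rightarrow> ('a \<Rightarrow> 'a \<Rightarrow> real) \<Rightarrow> bool" where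
  "doubling_mspace X d \<longleftrightarrow>
     (\<exists>N::nat. \<forall>S. S \<subseteq> X \<and> S \<noteq> {} \<and> Metric_space.mbounded X d S \<longrightarrow>
        (\<exists>F. finite F \<and> card F \<le> N \<and> S \<subseteq> \<Union>F \<and>
             (\<forall>T\<in>F. T \<subseteq> X \<and> mdiam d T \<le> mdiam d S / 2)))"

definition pointed_GH_conv ::
  "'a set \<Rightarrow> ('a \<Rightarrow> 'a \<Rightarrow> real) \<Rightarrow> (nat \<Rightarrow> real) \<Rightarrow> (nat \<Rightarrow> 'a) \<Rightarrow>
   'b set \<Rightarrow> ('b \<Rightarrow> 'b \<Rightarrow> real) \<Rightarrow> 'b \<Rightarrow> bool" where
  "pointed_GH_conv X d lam p Z dZ z \<longleftrightarrow>
     (\<forall>r>0. \<forall>\<epsilon>>0. \<forall>\<^sub>F n in sequentially.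
        (let B = {a \<in> X. d (p n) a / lam n < r} in
         \<exists>g. (\<forall>a\<in>B. g a \<in> Z) \<and> g (p n) = z \<and>
             (\<forall>a\<in>B. \<forall>b\<in>B. \<bar>dZ (g a) (g b) - d a b / lam n\<bar> < \<epsilon>) \<and>
             (\<forall>w\<in>Z. dZ z w < r - \<epsilon> \<longrightarrow> (\<exists>a\<in>B. dZ w (g a) < \<epsilon>))))"

definition weak_tangent ::
  "'a set \<Rightarrow> ('a \<Rightarrow> 'a \<Rightarrow> real) \<Rightarrow> 'a \<Rightarrow> 'b set \<Rightarrow> ('b \<Rightarrow> 'b \<Rightarrow> real) \<Rightarrow> 'b \<Rightarrow> bool" where
  "weak_tangent X d p Z dZ z \<longleftrightarrow>
     Metric_space Z dZ \<and> Metric_space.mcomplete Z dZ \<and> z \<in> Z \<and>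
     (\<exists>lam q. (\<forall>n. lam n > 0) \<and> lam \<longlonglongrightarrow> 0 \<and> (\<forall>n. q n \<in> X) \<and>
        ((\<lambda>n. d (q n) p) \<longlonglongrightarrow> 0) \<and> pointed_GH_conv X d lam q Z dZ z)"

end

theory Submission
  imports Defs
begin

lemma eta_basic:
  assumes H: "homeomorphism {0..} {0..} (eta::real\<Rightarrow>real) g"
  shows "eta 0 = 0" and "\<And>x y. 0 \<le> x \<Longrightarrow> x < y \<Longrightarrow> eta x < eta y"
    and "\<And>x. 0 \<le> x \<Longrightarrow> eta x \<ge> 0" and "\<And>y. 0 \<le> y \<Longrightarrow> g y \<ge> 0"
    and "\<And>y. 0 \<le> y \<Longrightarrow> eta (g y) = y" and "\<And>x. 0 \<le> x \<Longrightarrow> g (eta x) = x"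
    and "\<And>y. 0 \<le> y \<Longrightarrow> inv_into {0..} eta y = g y"
    and "continuous_on {0..} eta"
proof -
  have gf: "\<And>x. 0 \<le> x \<Longrightarrow> g (eta x) = x" and fg: "\<And>y. 0 \<le> y \<Longrightarrow> eta (g y) = y"
    and im: "eta ` {0..} = {0..}" "g ` {0..} = {0..}" and ce: "continuous_on {0..} eta"
    using H by (auto simp: homeomorphism_def)
  show "\<And>x. 0 \<le> x \<Longrightarrow> g (eta x) = x" "\<And>y. 0 \<le> y \<Longrightarrow> eta (g y) = y" "continuous_on {0..} eta"
    by (fact gf fg ce)+
  show pos: "\<And>x. 0 \<le> x \<Longrightarrow> eta x \<ge> 0" using im by auto
  show "\<And>y. 0 \<le> y \<Longrightarrow> g y \<ge> 0" using im by auto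
  have inj: "inj_on eta {a..b}" if "0 \<le> a" for a b
    using gf that by (metis atLeastAtMost_iff inj_on_inverseI order_trans)
  have cab: "continuous_on {a..b} eta" if "0 \<le> a" for a b
    using that by (intro continuous_on_subset[OF ce]) auto
  have e0: "eta 0 = 0"
  proof (rule ccontr)
    assume ne: "eta 0 \<noteq> 0"
    define a where "a = g 0"
    have a0: "a \<ge> 0" "eta a = 0" using fg im a_def by auto
    have "a \<noteq> 0" using ne a0 by auto
    then have "a > 0" using a0 by auto
    then have "(eta 0 < eta a \<and> eta a < eta (2*a)) \<or> (eta (2*a) < eta a \<and> eta a < eta 0)"
      using continuous_inj_imp_mono[of 0 a "2*a" eta] cab[of 0 "2*a"] inj[of 0 "2*a"] by auto
    then show False using a0 pos[of 0] pos[of "2*a"] \<open>a>0\<close> by auto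
  qed
  show "eta 0 = 0" by (fact e0)
  show mono: "\<And>x y. 0 \<le> x \<Longrightarrow> x < y \<Longrightarrow> eta x < eta y"
  proof -
    fix x y :: real assume xy: "0 \<le> x" "x < y"
    have ypos: "eta y > 0" using pos[of y] gf[of y] gf[of 0] e0 xy by (metis less_eq_real_def order.strict_trans1)
    show "eta x < eta y"
    proof (cases "x = 0")
      case True then show ?thesis using e0 ypos by simp
    next
      case False
      then have "x > 0" using xy by auto
      then have "(eta 0 < eta x \<and> eta x < eta y) \<or> (eta y < eta x \<and> eta x < eta 0)"
        using continuous_inj_imp_mono[of 0 x y eta] cab[of 0 y] inj[of 0 y] xy by auto
      then show ?thesis using e0 ypos by auto
    qed
  qed
  show "\<And>y. 0 \<le> y \<Longrightarrow> inv_into {0..} eta y = g y"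
  proof -
    fix y :: real assume "0 \<le> y"
    then have "g y \<in> {0..}" "eta (g y) = y" using im fg by auto
    moreover have "inj_on eta {0..}" using gf by (metis atLeast_iff inj_on_inverseI)
    ultimately show "inv_into {0..} eta y = g y" by (metis inv_into_f_f)
  qed
qed

lemma dual_props:
  assumes H: "homeomorphism {0..} {0..} (eta::real\<Rightarrow>real) g"
  shows "\<And>t. 0 \<le> t \<Longrightarrow> dual_distortion eta t \<ge> 0"
    and "\<And>t. 0 < t \<Longrightarrow> dual_distortion eta t > 0"
    and "\<And>s t. 0 \<le> s \<Longrightarrow> s \<le> t \<Longrightarrow> dual_distortion eta s \<le> dual_distortion eta t"
    and "\<And>e. e > 0 \<Longrightarrow> \<exists>\<delta>>0. \<forall>t. 0 \<le> t \<and> t < \<delta> \<longrightarrow> dual_distortion eta t < e"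
    and "\<And>s t. 0 < s \<Longrightarrow> 0 < t \<Longrightarrow> s \<le> eta t \<Longrightarrow> 1/t \<le> dual_distortion eta (1/s)"
proof -
  note E = eta_basic[OF H]
  have DD: "\<And>t. 0 \<le> t \<Longrightarrow> dual_distortion eta t = 1 / g (1/t)"
    unfolding dual_distortion_def using E(7) by simp
  have g0: "g 0 = 0" using E(1) E(6)[of 0] by simp
  have gmono: "g a < g b" if "0 \<le> a" "a < b" for a b
  proof (rule ccontr)
    assume "\<not> g a < g b"
    then have "g b \<le> g a" by simp
    then have "eta (g b) \<le> eta (g a)"
      using E(2)[of "g b" "g a"] E(4)[of b] that by (cases "g b = g a") auto
    then show False using E(5) that by auto
  qed
  have gpos: "g y > 0" if "y > 0" for y using gmono[of 0 y] g0 that by simp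
  show "\<And>t. 0 \<le> t \<Longrightarrow> dual_distortion eta t \<ge> 0"
    using DD E(4) by simp
  show "\<And>t. 0 < t \<Longrightarrow> dual_distortion eta t > 0"
    using DD gpos by simp
  show "\<And>s t. 0 \<le> s \<Longrightarrow> s \<le> t \<Longrightarrow> dual_distortion eta s \<le> dual_distortion eta t"
  proof -
    fix s t :: real assume st: "0 \<le> s" "s \<le> t"
    show "dual_distortion eta s \<le> dual_distortion eta t"
    proof (cases "s = 0")
      case True then show ?thesis using DD g0 E(4) st by simp
    next
      case False
      then have "s > 0" using st by simp
      then have "1/t \<le> 1/s" using st by (simp add: frac_le)
      then have "g (1/t) \<le> g (1/s)" using gmono[of "1/t" "1/s"] \<open>s>0\<close> st
        by (cases "1/t = 1/s") auto
      moreover have "g (1/t) > 0" using gpos \<open>s>0\<close> st by simp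
      ultimately show ?thesis using DD st by (simp add: frac_le)
    qed
  qed
  show "\<And>e. e > 0 \<Longrightarrow> \<exists>\<delta>>0. \<forall>t. 0 \<le> t \<and> t < \<delta> \<longrightarrow> dual_distortion eta t < e"
  proof -
    fix e :: real assume e: "e > 0"
    have ep: "eta (1/e) > 0" using E(2)[of 0 "1/e"] E(1) e by simp
    show "\<exists>\<delta>>0. \<forall>t. 0 \<le> t \<and> t < \<delta> \<longrightarrow> dual_distortion eta t < e"
    proof (intro exI[of _ "1 / eta (1/e)"] conjI allI impI)
      show "0 < 1 / eta (1/e)" using ep by simp
      fix t assume t: "0 \<le> t \<and> t < 1 / eta (1 / e)"
      show "dual_distortion eta t < e"
      proof (cases "t = 0")
        case True then show ?thesis using DD g0 e by simp
      next
        case False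
        then have tp: "t > 0" using t by simp
        then have "eta (1/e) < 1/t" using t ep by (simp add: field_simps)
        then have "g (eta (1/e)) < g (1/t)" using gmono ep by simp
        then have "1/e < g (1/t)" using E(6) e by simp
        moreover have "g (1/t) > 0" using gpos tp by simp
        ultimately show ?thesis using DD[of t] tp e by (simp add: divide_less_eq mult.commute)
      qed
    qed
  qed
  show "\<And>s t. 0 < s \<Longrightarrow> 0 < t \<Longrightarrow> s \<le> eta t \<Longrightarrow> 1/t \<le> dual_distortion eta (1/s)"
  proof -
    fix s t :: real assume st: "0 < s" "0 < t" "s \<le> eta t"
    have "g s \<le> g (eta t)" using gmono[of s "eta t"] st by (cases "s = eta t") auto
    then have "g s \<le> t" using E(6) st by simp
    moreover have "g s > 0" using gpos st by simp
    ultimately show "1/t \<le> dual_distortion eta (1/s)" using DD st by (simp add: frac_le)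
  qed
qed


lemma mdiam_upper:
  assumes "Metric_space X d" "U \<subseteq> Metric_space.mball X d x r" "u \<in> U" "v \<in> U"
  shows "d u v \<le> mdiam d U"
proof -
  interpret Metric_space X d by fact
  have "bdd_above {d x y | x y. x \<in> U \<and> y \<in> U}"
  proof (rule bdd_aboveI)
    fix t assume "t \<in> {d x y | x y. x \<in> U \<and> y \<in> U}"
    then obtain a b where ab: "t = d a b" "a \<in> U" "b \<in> U" by auto
    then have "d a b \<le> d a x + d x b" using assms(2) by (intro triangle) auto
    also have "\<dots> \<le> 2*r"
    proof -
      have "d x a < r" "d x b < r" using ab assms(2) by auto
      then show ?thesis using commute[of a x] by simp
    qed
    finally show "t \<le> 2*r" using ab by simp
  qed
  then show ?thesis unfolding mdiam_def using assms by (intro cSup_upper) auto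
qed

lemma mdiam_less:
  assumes "a < mdiam d U" "U \<noteq> {}"
  shows "\<exists>u\<in>U. \<exists>v\<in>U. a < d u v"
proof -
  have "{d x y | x y. x \<in> U \<and> y \<in> U} \<noteq> {}" using assms by auto
  show ?thesis
  proof (rule ccontr)
    assume "\<not> ?thesis"
    then have "\<forall>t \<in> {d x y | x y. x \<in> U \<and> y \<in> U}. t \<le> a" by (auto simp: not_less)
    then have "mdiam d U \<le> a" unfolding mdiam_def using \<open>{d x y | x y. x \<in> U \<and> y \<in> U} \<noteq> {}\<close>
      by (intro cSup_least) auto
    then show False using assms(1) by simp
  qed
qed

lemma qs_inv:
  assumes M: "Metric_space X d" and Q: "quasisymmetric_on X d X d eta U f" and fU: "f ` U = X"
    and H: "homeomorphism {0..} {0..} (eta::real\<Rightarrow>real) g"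
  shows "\<And>a. a\<in>X \<Longrightarrow> inv_into U f a \<in> U \<and> f (inv_into U f a) = a"
    and "\<And>a b c. a\<in>X \<Longrightarrow> b\<in>X \<Longrightarrow> c\<in>X \<Longrightarrow> a\<noteq>c \<Longrightarrow>
       d (inv_into U f a) (inv_into U f b) / d (inv_into U f a) (inv_into U f c)
         \<le> dual_distortion eta (d a b / d a c)"
proof -
  interpret Metric_space X d by fact
  let ?h = "inv_into U f"
  show hf: "\<And>a. a\<in>X \<Longrightarrow> ?h a \<in> U \<and> f (?h a) = a"
    using fU inv_into_into[of _ f U] f_inv_into_f[of _ f U] by auto
  have UX: "U \<subseteq> X" and qs: "\<And>x y z. x\<in>U \<Longrightarrow> y\<in>U \<Longrightarrow> z\<in>U \<Longrightarrow> x \<noteq> z \<Longrightarrow>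
        d (f x) (f y) / d (f x) (f z) \<le> eta (d x y / d x z)"
    using Q unfolding quasisymmetric_on_def by auto
  note DP = dual_props[OF H]
  fix a b c assume abc: "a\<in>X" "b\<in>X" "c\<in>X" "a\<noteq>c"
  show "d (?h a) (?h b) / d (?h a) (?h c) \<le> dual_distortion eta (d a b / d a c)"
  proof (cases "a = b")
    case True
    have "?h b \<in> X" using hf UX abc by auto
    then show ?thesis using DP(1)[of "d a b / d a c"] abc True by simp
  next
    case False
    define x y w where xyw_def: "x = ?h a" "y = ?h b" "w = ?h c"
    have inU: "x \<in> U" "y \<in> U" "w \<in> U" and fx: "f x = a" "f y = b" "f w = c"
      using hf abc xyw_def by auto
    have "x \<noteq> y" "x \<noteq> w" using fx False abc by auto
    have 1: "d a c / d a b \<le> eta (d x w / d x y)"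
      using qs[of x w y] inU fx \<open>x \<noteq> y\<close> by simp
    have sp: "d a c / d a b > 0" using abc False by simp
    have "x \<in> X" "y \<in> X" "w \<in> X" using inU UX by auto
    then have tp: "d x w / d x y > 0" using \<open>x \<noteq> y\<close> \<open>x \<noteq> w\<close> by simp
    have "1 / (d x w / d x y) \<le> dual_distortion eta (1 / (d a c / d a b))"
      by (rule DP(5)[OF sp tp 1])
    then show ?thesis using xyw_def by simp
  qed
qed

lemma cluster_point:
  fixes \<Psi> :: "nat \<Rightarrow> 'x \<Rightarrow> 'b"
  assumes MZ: "Metric_space Z dZ" and cK: "compactin (Metric_space.mtopology Z dZ) K"
    and PS: "\<And>k. \<Psi> k \<in> extensional X \<and> (\<forall>x\<in>X. \<Psi> k x \<in> K)"
  shows "\<exists>\<phi>. (\<forall>x\<in>X. \<phi> x \<in> K) \<and> (\<forall>m x y w e. x\<in>X \<longrightarrow> y\<in>X \<longrightarrow> w\<in>X \<longrightarrow> e>0 \<longrightarrow>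
      (\<exists>k\<ge>m. dZ (\<Psi> k x) (\<phi> x) < e \<and> dZ (\<Psi> k y) (\<phi> y) < e \<and> dZ (\<Psi> k w) (\<phi> w) < e))"
proof -
  interpret Z: Metric_space Z dZ by fact
  define T where "T = product_topology (\<lambda>_. subtopology Z.mtopology K) X"
  have KZ: "K \<subseteq> Z" using compactin_subset_topspace[OF cK] by simp
  have tT: "topspace T = (\<Pi>\<^sub>E x\<in>X. K)" unfolding T_def using KZ by auto
  have PsT: "\<Psi> k \<in> topspace T" for k using PS[of k] tT by (auto simp: PiE_iff)
  have cT: "compact_space T" unfolding T_def compact_space_product_topology
    using compact_space_subtopology[OF cK] by blast
  define C where "C m = T closure_of (\<Psi> ` {m..})" for m
  have "(\<Inter>m. C m) \<noteq> {}"
  proof (rule compact_space_imp_nest[OF cT])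
    show "closedin T (C m)" for m unfolding C_def by simp
    show "C m \<noteq> {}" for m
    proof -
      have "\<Psi> ` {m..} \<subseteq> topspace T" using PsT by auto
      then have "\<Psi> m \<in> C m" unfolding C_def using closure_of_subset by fastforce
      then show ?thesis by auto
    qed
    show "decseq C" unfolding decseq_def C_def
      by (auto intro!: closure_of_mono image_mono)
  qed
  then obtain \<phi> where phi: "\<And>m. \<phi> \<in> C m" by blast
  have phiT: "\<phi> \<in> topspace T" using phi[of 0] closure_of_subset_topspace[of T] unfolding C_def by blast
  then have phiK: "\<forall>x\<in>X. \<phi> x \<in> K" using tT by (auto simp: PiE_iff)
  have proj: "continuous_map T Z.mtopology (\<lambda>\<psi>. \<psi> x)" if "x \<in> X" for x
    unfolding T_def using continuous_map_product_projection[OF that, of "\<lambda>_. subtopology Z.mtopology K"]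
    using continuous_map_into_fulltopology by blast
  have opn: "openin T {\<psi> \<in> topspace T. \<psi> x \<in> Z.mball (\<phi> x) e}" if "x \<in> X" for x e
    using openin_continuous_map_preimage[OF proj[OF that] Z.openin_mball] .
  show ?thesis
  proof (intro exI[of _ \<phi>] conjI allI impI)
    show "\<forall>x\<in>X. \<phi> x \<in> K" by fact
    fix m x y w and e :: real
    assume xyw: "x \<in> X" "y \<in> X" "w \<in> X" and e: "e > 0"
    define Ob where "Ob = {\<psi> \<in> topspace T. \<psi> x \<in> Z.mball (\<phi> x) e} \<inter>
       {\<psi> \<in> topspace T. \<psi> y \<in> Z.mball (\<phi> y) e} \<inter> {\<psi> \<in> topspace T. \<psi> w \<in> Z.mball (\<phi> w) e}"
    have "openin T Ob" unfolding Ob_def using opn xyw by (intro openin_Int) auto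
    moreover have "\<phi> \<in> Ob" unfolding Ob_def using phiT phiK xyw KZ e by auto
    ultimately obtain \<psi> where "\<psi> \<in> \<Psi> ` {m..}" "\<psi> \<in> Ob"
      using phi[of m] unfolding C_def in_closure_of by blast
    then obtain k where "k \<ge> m" "\<Psi> k \<in> Ob" by auto
    then show "\<exists>k\<ge>m. dZ (\<Psi> k x) (\<phi> x) < e \<and> dZ (\<Psi> k y) (\<phi> y) < e \<and> dZ (\<Psi> k w) (\<phi> w) < e"
      unfolding Ob_def using Z.commute by auto
  qed
qed


lemma (in Metric_space) tb_from_net:
  assumes "S \<subseteq> M" and net: "\<And>e. e > 0 \<Longrightarrow> \<exists>F. finite F \<and> F \<subseteq> M \<and> (\<forall>w\<in>S. \<exists>c\<in>F. d c w < e)"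
  shows "mtotally_bounded S"
  unfolding mtotally_bounded_def
proof (intro allI impI)
  fix e :: real assume e: "e > 0"
  obtain F where F: "finite F" "F \<subseteq> M" "\<forall>w\<in>S. \<exists>c\<in>F. d c w < e/2" using net[of "e/2"] e by auto
  define F' where "F' = {c \<in> F. \<exists>w\<in>S. d c w < e/2}"
  define pick where "pick c = (SOME w. w \<in> S \<and> d c w < e/2)" for c
  have pk: "pick c \<in> S \<and> d c (pick c) < e/2" if "c \<in> F'" for c
  proof -
    have "\<exists>w. w \<in> S \<and> d c w < e/2" using that unfolding F'_def by auto
    then show ?thesis unfolding pick_def by (rule someI_ex)
  qed
  show "\<exists>K. finite K \<and> K \<subseteq> S \<and> S \<subseteq> (\<Union>x\<in>K. mball x e)"
  proof (intro exI[of _ "pick ` F'"] conjI)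
    show "finite (pick ` F')" using F(1) unfolding F'_def by simp
    show "pick ` F' \<subseteq> S" using pk by auto
    show "S \<subseteq> (\<Union>x\<in>pick ` F'. mball x e)"
    proof
      fix w assume w: "w \<in> S"
      then obtain c where c: "c \<in> F" "d c w < e/2" using F(3) by auto
      then have cF: "c \<in> F'" unfolding F'_def using w by auto
      have "d (pick c) w \<le> d (pick c) c + d c w"
        using pk[OF cF] c F(2) w assms(1) by (intro triangle) auto
      also have "\<dots> < e" using pk[OF cF] c commute[of c "pick c"] by simp
      finally show "w \<in> (\<Union>x\<in>pick ` F'. mball x e)"
        using cF w assms(1) pk[OF cF] by auto
    qed
  qed
qed

lemma K_compact:
  assumes MX: "Metric_space X d" and cX: "compact_space (Metric_space.mtopology X d)"
    and MZ: "Metric_space Z dZ" and cZ: "Metric_space.mcomplete Z dZ"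
    and GH: "pointed_GH_conv X d lam q Z dZ z" and lp: "\<forall>n. lam n > 0" and z: "z \<in> Z"
  shows "compactin (Metric_space.mtopology Z dZ) (Metric_space.mcball Z dZ z 3)"
proof -
  interpret X: Metric_space X d by fact
  interpret Z: Metric_space Z dZ by fact
  let ?K = "Z.mcball z 3"
  have tbX: "X.mtotally_bounded X"
    using X.compactin_imp_mtotally_bounded cX unfolding compact_space_def by simp
  have "Z.mtotally_bounded ?K"
  proof (rule Z.tb_from_net)
    show "?K \<subseteq> Z" by (rule Z.mcball_subset_mspace)
    fix e :: real assume e: "e > 0"
    define e1 where "e1 = min (e/8) (1/2)"
    have e1: "e1 > 0" "e1 \<le> e/8" "e1 \<le> 1/2" using e unfolding e1_def by auto
    define P where "P n \<longleftrightarrow>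
        (let B = {a \<in> X. d (q n) a / lam n < 4} in
         \<exists>g. (\<forall>a\<in>B. g a \<in> Z) \<and> g (q n) = z \<and>
             (\<forall>a\<in>B. \<forall>b\<in>B. \<bar>dZ (g a) (g b) - d a b / lam n\<bar> < e1) \<and>
             (\<forall>w\<in>Z. dZ z w < 4 - e1 \<longrightarrow> (\<exists>a\<in>B. dZ w (g a) < e1)))" for n
    have "eventually P sequentially"
      using GH e1 unfolding pointed_GH_conv_def P_def by simp
    then obtain n where "P n" by (auto simp: eventually_sequentially)
    then have "let B = {a \<in> X. d (q n) a / lam n < 4} in
         \<exists>g. (\<forall>a\<in>B. g a \<in> Z) \<and> g (q n) = z \<and>
             (\<forall>a\<in>B. \<forall>b\<in>B. \<bar>dZ (g a) (g b) - d a b / lam n\<bar> < e1) \<and>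
             (\<forall>w\<in>Z. dZ z w < 4 - e1 \<longrightarrow> (\<exists>a\<in>B. dZ w (g a) < e1))"
      unfolding P_def .
    then obtain g where g: "\<forall>a\<in>{a \<in> X. d (q n) a / lam n < 4}. g a \<in> Z"
      "\<forall>a\<in>{a \<in> X. d (q n) a / lam n < 4}. \<forall>b\<in>{a \<in> X. d (q n) a / lam n < 4}.
          \<bar>dZ (g a) (g b) - d a b / lam n\<bar> < e1"
      "\<forall>w\<in>Z. dZ z w < 4 - e1 \<longrightarrow> (\<exists>a\<in>{a \<in> X. d (q n) a / lam n < 4}. dZ w (g a) < e1)"
      unfolding Let_def by blast
    define B where "B = {a \<in> X. d (q n) a / lam n < 4}"
    have ln: "lam n > 0" using lp by simp
    have "X.mtotally_bounded B" using tbX unfolding B_def by (rule X.mtotally_bounded_subset) auto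
    then obtain T where T: "finite T" "T \<subseteq> B" "B \<subseteq> (\<Union>x\<in>T. X.mball x (lam n * (e/8)))"
    proof -
      have pos: "lam n * (e/8) > 0" using ln e by simp
      show ?thesis
        using \<open>X.mtotally_bounded B\<close>[unfolded X.mtotally_bounded_def, rule_format, OF pos] that
        by blast
    qed
    show "\<exists>F. finite F \<and> F \<subseteq> Z \<and> (\<forall>w\<in>?K. \<exists>c\<in>F. dZ c w < e)"
    proof (intro exI[of _ "g ` T"] conjI ballI)
      show "finite (g ` T)" using T by simp
      show "g ` T \<subseteq> Z" using T g(1) unfolding B_def by auto
      fix w assume w: "w \<in> ?K"
      then have "w \<in> Z" "dZ z w < 4 - e1" using e1 by auto
      then obtain a where a: "a \<in> B" "dZ w (g a) < e1" using g(3) unfolding B_def by auto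
      then obtain t where t: "t \<in> T" "a \<in> X.mball t (lam n * (e/8))" using T by auto
      have "d t a / lam n < e/8" using t ln by (simp add: divide_less_eq mult.commute)
      moreover have "\<bar>dZ (g t) (g a) - d t a / lam n\<bar> < e1"
      proof -
        have "t \<in> B" using t T by auto
        then show ?thesis using g(2)[folded B_def] a(1) by simp
      qed
      ultimately have "dZ (g t) (g a) < e/8 + e1" by linarith
      moreover have "dZ (g t) w \<le> dZ (g t) (g a) + dZ (g a) w"
        using g(1) t T a \<open>w \<in> Z\<close> unfolding B_def by (intro Z.triangle) auto
      moreover have "dZ (g a) w = dZ w (g a)" by (rule Z.commute)
      ultimately have "dZ (g t) w < e" using a e1 by linarith
      then show "\<exists>c\<in>g ` T. dZ c w < e" using t by auto
    qed
  qed
  moreover have "Z.mtopology closure_of ?K = ?K" by (rule closure_of_closedin) simp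
  ultimately show ?thesis
    using Z.mtotally_bounded_eq_compact_closure_of[OF cZ, of ?K] by simp
qed

lemma limit_ineq:
  fixes A B Q c Cc :: real
  assumes ap: "\<And>e. e > 0 \<Longrightarrow> \<exists>a b. \<bar>A - a\<bar> < e \<and> \<bar>B - b\<bar> < e \<and> a \<le> Q*b \<and> c \<le> b \<and> b \<le> Cc"
    and Q: "Q \<ge> 0"
  shows "c \<le> B" "A \<le> Q*B" "A \<le> Q*Cc"
proof -
  show "c \<le> B"
  proof (rule ccontr)
    assume "\<not> c \<le> B"
    then obtain a b where "\<bar>B - b\<bar> < c - B" "c \<le> b" using ap[of "c - B"] by auto
    then show False by linarith
  qed
  show "A \<le> Q*B"
  proof (rule ccontr)
    assume nA: "\<not> A \<le> Q*B"
    define e where "e = (A - Q*B)/(Q+1)"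
    have e: "e > 0" using nA Q unfolding e_def by simp
    obtain a b where ab: "\<bar>A - a\<bar> < e" "\<bar>B - b\<bar> < e" "a \<le> Q*b" using ap[OF e] by auto
    have "Q*b \<le> Q*(B+e)" using ab(2) Q by (intro mult_left_mono) auto
    then have "A < Q*B + Q*e + e" using ab by (simp add: algebra_simps)
    moreover have "(Q+1)*e = A - Q*B" unfolding e_def using Q by simp
    ultimately show False by (simp add: algebra_simps)
  qed
  show "A \<le> Q*Cc"
  proof (rule ccontr)
    assume nA: "\<not> A \<le> Q*Cc"
    define e where "e = A - Q*Cc"
    have e: "e > 0" using nA unfolding e_def by simp
    obtain a b where ab: "\<bar>A - a\<bar> < e" "a \<le> Q*b" "b \<le> Cc" using ap[OF e] by auto
    have "Q*b \<le> Q*Cc" using ab Q by (intro mult_left_mono) auto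
    then show False using ab unfolding e_def by linarith
  qed
qed

lemma (in Metric_space) dist_diff:
  assumes "a \<in> M" "b \<in> M" "c \<in> M" "e \<in> M"
  shows "\<bar>d a b - d c e\<bar> \<le> d a c + d b e"
proof -
  have "d a b \<le> d a c + d c e + d e b" using assms triangle[of a c b] triangle[of c e b] by simp
  moreover have "d c e \<le> d c a + d a b + d b e" using assms triangle[of c a e] triangle[of a b e] by simp
  ultimately show ?thesis using commute[of a c] commute[of b e] by linarith
qed

theorem corollary5p1:
  fixes X :: "'a set" and d :: "'a \<Rightarrow> 'a \<Rightarrow> real" and p :: 'a
    and eta :: "real \<Rightarrow> real"
    and Z :: "'b set" and dZ :: "'b \<Rightarrow> 'b \<Rightarrow> real" and z :: 'b
  assumes "Metric_space X d"
    and "proper_mspace X d"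
    and "doubling_mspace X d"
    and "p \<in> X"
    and "distortion_fn eta"
    and "\<exists>V D. openin (Metric_space.mtopology X d) V \<and> p \<in> V \<and> D \<subseteq> V \<and>
               V \<subseteq> (Metric_space.mtopology X d) closure_of D \<and>
               unif_comp_self_qs X d eta D"
    and "weak_tangent X d p Z dZ z"
  shows "\<exists>f. quasisymmetric_on X d Z dZ (dual_distortion eta) X f"
proof -
  interpret Metric_space X d by fact
  obtain V D where VD: "openin mtopology V" "p \<in> V" "D \<subseteq> V" "V \<subseteq> mtopology closure_of D"
    and uc: "unif_comp_self_qs X d eta D"
    using assms(6) by blast
  obtain r0 C where rC: "r0 > 0" "C > 0" and US0: "\<forall>x\<in>D. \<forall>r. 0 < r \<and> r < r0 \<longrightarrow>
      (\<exists>U. U \<subseteq> mball x r \<and> x \<in> U \<and> r / C \<le> mdiam d U \<and> mdiam d U \<le> C * r \<and>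
           (\<exists>f. quasisymmetric_on X d X d eta U f \<and> f ` U = X))"
    using uc unfolding unif_comp_self_qs_def by (elim exE conjE) (intro that)
  have US: "\<exists>U. U \<subseteq> mball x r \<and> x \<in> U \<and> r / C \<le> mdiam d U \<and> mdiam d U \<le> C * r \<and>
           (\<exists>f. quasisymmetric_on X d X d eta U f \<and> f ` U = X)" if "x \<in> D" "0 < r" "r < r0" for x r
    using US0 that by blast
  obtain g where H: "homeomorphism {0..} {0..} eta g" using assms(5) unfolding distortion_fn_def by blast
  note E = eta_basic[OF H] and DP = dual_props[OF H]
  let ?E = "dual_distortion eta"
  have emono: "eta s \<le> eta t" if "0 \<le> s" "s \<le> t" for s t
    using E(2)[of s t] that by (cases "s = t") auto
  have injqs: "inj_on f U" if "quasisymmetric_on X d X d eta U f" for U f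
  proof -
    have "U \<subseteq> X" "homeomorphic_map (subtopology mtopology U) (subtopology mtopology (f ` U)) f"
      using that unfolding quasisymmetric_on_def by auto
    then have "inj_on f (topspace (subtopology mtopology U))" using homeomorphic_imp_injective_map by blast
    moreover have "topspace (subtopology mtopology U) = U" using \<open>U \<subseteq> X\<close> by auto
    ultimately show ?thesis by simp
  qed
  have "D \<noteq> {}" using VD(2,4) by auto
  then obtain x0 where x0: "x0 \<in> D" by blast
  obtain U0 f0 where U0: "U0 \<subseteq> mball x0 (r0/2)" "x0 \<in> U0" "r0/2/C \<le> mdiam d U0"
    and f0: "quasisymmetric_on X d X d eta U0 f0" "f0 ` U0 = X"
    using US[of x0 "r0/2"] x0 rC by auto
  have U0X: "U0 \<subseteq> X" using f0(1) unfolding quasisymmetric_on_def by blast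
  have qs0: "\<And>x y z. x\<in>U0 \<Longrightarrow> y\<in>U0 \<Longrightarrow> z\<in>U0 \<Longrightarrow> x\<noteq>z \<Longrightarrow>
      d (f0 x) (f0 y) / d (f0 x) (f0 z) \<le> eta (d x y / d x z)"
    using f0(1) unfolding quasisymmetric_on_def by blast
  have inj0: "inj_on f0 U0" using injqs[OF f0(1)] .
  have "r0/2/C > 0" using rC by simp
  then have "0 < mdiam d U0" using U0(3) by linarith
  then obtain u0 v0 where uv0: "u0 \<in> U0" "v0 \<in> U0" "0 < d u0 v0" using mdiam_less[of 0 d U0] U0(2) by blast
  have "u0 \<noteq> v0" using uv0 U0X by auto
  define a1 a2 where "a1 = f0 u0" and "a2 = f0 v0"
  have a12: "a1 \<in> X" "a2 \<in> X" "a1 \<noteq> a2"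
    using uv0 f0(2) inj0 \<open>u0 \<noteq> v0\<close> unfolding a1_def a2_def inj_on_def by auto
  define R where "R = eta (r0 / d u0 v0) * d a1 a2"
  have bnd: "d a1 y \<le> R" if "y \<in> X" for y
  proof -
    obtain u where u: "u \<in> U0" "y = f0 u" using f0(2) \<open>y \<in> X\<close> by auto
    have "d x0 u0 < r0/2" "d x0 u < r0/2" using U0(1) uv0 u by auto
    moreover have "x0 \<in> X" "u0 \<in> X" "u \<in> X" using U0X U0(2) uv0 u by auto
    ultimately have "d u0 u < r0" using triangle[of u0 x0 u] commute[of u0 x0] by linarith
    then have "d u0 u / d u0 v0 \<le> r0 / d u0 v0" using uv0 by (simp add: divide_right_mono)
    then have "eta (d u0 u / d u0 v0) \<le> eta (r0 / d u0 v0)" using emono by simp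
    with qs0[of u0 u v0] have "d a1 y / d a1 a2 \<le> eta (r0 / d u0 v0)"
      using u uv0 \<open>u0 \<noteq> v0\<close> unfolding a1_def a2_def by simp
    moreover have "d a1 a2 > 0" using a12 by simp
    ultimately show "d a1 y \<le> R" unfolding R_def by (simp add: divide_le_eq)
  qed
  have "d a1 a2 > 0" using a12 by simp
  then have Rpos: "R > 0" using bnd[OF a12(2)] by linarith
  have XK: "X = mcball a1 R" using bnd mcball_subset_mspace a12 by auto
  have "compactin mtopology (mcball a1 R)" using assms(2) unfolding proper_mspace_def by blast
  then have cX: "compact_space mtopology" using XK by (simp add: compact_space_def)
  have dbound: "d a b \<le> 2*R" if "a \<in> X" "b \<in> X" for a b
    using triangle[of a a1 b] bnd[OF that(1)] bnd[OF that(2)] commute[of a a1] that a12 by simp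
  obtain lam q where wt: "\<forall>n. lam n > 0" "lam \<longlonglongrightarrow> 0" "\<forall>n. q n \<in> X" "(\<lambda>n. d (q n) p) \<longlonglongrightarrow> 0"
      "pointed_GH_conv X d lam q Z dZ z"
    and MZ: "Metric_space Z dZ" and cZ: "Metric_space.mcomplete Z dZ" and zZ: "z \<in> Z"
    using assms(7) unfolding weak_tangent_def by blast
  interpret Z: Metric_space Z dZ by (rule MZ)
  define K where "K = Z.mcball z 3"
  have cK: "compactin Z.mtopology K" unfolding K_def by (rule K_compact[OF assms(1) cX MZ cZ wt(5) wt(1) zZ])
  obtain e0 where e0: "e0 > 0" "mball p e0 \<subseteq> V" using VD(1,2) openin_mtopology by blast
  have evV: "eventually (\<lambda>n. q n \<in> V) sequentially"
  proof -
    have "eventually (\<lambda>n. d (q n) p < e0) sequentially" using order_tendstoD(2)[OF wt(4) e0(1)] .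
    then show ?thesis
    proof (rule eventually_mono)
      fix n assume "d (q n) p < e0"
      then have "q n \<in> mball p e0" using wt(3) commute[of p "q n"] assms(4) by simp
      then show "q n \<in> V" using e0 by blast
    qed
  qed
  have evr: "eventually (\<lambda>n. lam n < r0) sequentially" using order_tendstoD(2)[OF wt(2) rC(1)] .
  define Good where "Good k \<psi> Dk \<longleftrightarrow> \<psi> \<in> extensional X \<and> (\<forall>x\<in>X. \<psi> x \<in> K) \<and>
     (\<forall>x\<in>X. \<forall>y\<in>X. \<bar>dZ (\<psi> x) (\<psi> y) - Dk x y\<bar> < 1/(real k+1)) \<and>
     (\<forall>x\<in>X. \<forall>y\<in>X. \<forall>w\<in>X. x \<noteq> w \<longrightarrow> Dk x y / Dk x w \<le> ?E (d x y / d x w)) \<and>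
     (\<forall>x\<in>X. \<forall>y\<in>X. 0 \<le> Dk x y \<and> Dk x y \<le> C \<and> Dk x y = Dk y x \<and> (x \<noteq> y \<longrightarrow> 0 < Dk x y) \<and> (x = y \<longrightarrow> Dk x y = 0)) \<and>
     (\<forall>x\<in>X. \<forall>y\<in>X. \<forall>w\<in>X. Dk x y \<le> Dk x w + Dk w y) \<and>
     (\<exists>u\<in>X. \<exists>v\<in>X. 1/(2*C) \<le> Dk u v)" for k \<psi> and Dk :: "'a \<Rightarrow> 'a \<Rightarrow> real"
  have exGood: "\<exists>\<psi> Dk. Good k \<psi> Dk" for k
  proof -
    define ek where "ek = 1/(real k + 1)"
    have ek: "ek > 0" "ek \<le> 1" unfolding ek_def by (auto simp: field_simps)
    define P where "P n \<longleftrightarrow> (let B = {a \<in> X. d (q n) a / lam n < 3} in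
         \<exists>G. (\<forall>a\<in>B. G a \<in> Z) \<and> G (q n) = z \<and>
             (\<forall>a\<in>B. \<forall>b\<in>B. \<bar>dZ (G a) (G b) - d a b / lam n\<bar> < ek) \<and>
             (\<forall>w\<in>Z. dZ z w < 3 - ek \<longrightarrow> (\<exists>a\<in>B. dZ w (G a) < ek)))" for n
    have "eventually P sequentially" using wt(5) ek(1) unfolding pointed_GH_conv_def P_def by simp
    then have "eventually (\<lambda>n. P n \<and> q n \<in> V \<and> lam n < r0) sequentially"
      using evV evr by (intro eventually_conj)
    then obtain n where n: "P n" "q n \<in> V" "lam n < r0" by (auto simp: eventually_sequentially)
    define l where "l = lam n"
    have lpos: "l > 0" using wt(1) unfolding l_def by simp
    have lr: "l < r0" using n(3) unfolding l_def .
    define B where "B = {a \<in> X. d (q n) a / l < 3}"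
    obtain G where G: "\<forall>a\<in>B. G a \<in> Z" "G (q n) = z" "\<forall>a\<in>B. \<forall>b\<in>B. \<bar>dZ (G a) (G b) - d a b / l\<bar> < ek"
      using n(1) unfolding P_def Let_def B_def l_def by blast
    have qX: "q n \<in> X" using wt(3) by simp
    have "q n \<in> mtopology closure_of D" using n(2) VD(4) by blast
    then obtain x1 where x1: "x1 \<in> D" "x1 \<in> mball (q n) l" unfolding metric_closure_of using lpos by blast
    obtain U f where U: "U \<subseteq> mball x1 l" "x1 \<in> U" "l / C \<le> mdiam d U" "mdiam d U \<le> C * l"
      and f: "quasisymmetric_on X d X d eta U f" "f ` U = X"
      using US[OF x1(1) lpos lr] by blast
    define h where "h = inv_into U f"
    have hU: "h a \<in> U" "f (h a) = a" if "a \<in> X" for a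
      using qs_inv(1)[OF assms(1) f(1) f(2) H that] unfolding h_def by auto
    have hqs: "d (h a) (h b) / d (h a) (h c) \<le> ?E (d a b / d a c)" if "a\<in>X" "b\<in>X" "c\<in>X" "a\<noteq>c" for a b c
      using qs_inv(2)[OF assms(1) f(1) f(2) H that] unfolding h_def .
    have UX: "U \<subseteq> X" using U(1) mball_subset_mspace by blast
    have x1X: "x1 \<in> X" using x1(2) by auto
    have hX: "h a \<in> X" if "a\<in>X" for a using hU(1)[OF that] UX by blast
    have hd: "d (q n) (h a) / l < 2" if "a \<in> X" for a
    proof -
      have "d x1 (h a) < l" using U(1) hU(1)[OF that] by auto
      moreover have "d (q n) x1 < l" using x1(2) by auto
      moreover have "d (q n) (h a) \<le> d (q n) x1 + d x1 (h a)" using qX x1X hX[OF that] by (rule triangle)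
      ultimately have "d (q n) (h a) < 2*l" by linarith
      then show ?thesis using lpos by (simp add: divide_less_eq)
    qed
    have hB: "h a \<in> B" if "a\<in>X" for a
      unfolding B_def using hX[OF that] hd[OF that] by simp
    have qB: "q n \<in> B" unfolding B_def using qX lpos by simp
    have injf: "inj_on f U" by (rule injqs[OF f(1)])
    define \<psi> where "\<psi> = restrict (\<lambda>x. G (h x)) X"
    define Dk where "Dk = (\<lambda>x y. d (h x) (h y) / l)"
    have dist_approx: "\<bar>dZ (\<psi> x) (\<psi> y) - Dk x y\<bar> < ek" if "x\<in>X" "y\<in>X" for x y
      using bspec[OF bspec[OF G(3) hB[OF that(1)]] hB[OF that(2)]] that unfolding \<psi>_def Dk_def by simp
    have Dle: "Dk x y \<le> C" if "x\<in>X" "y\<in>X" for x y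
    proof -
      have "d (h x) (h y) \<le> mdiam d U" using mdiam_upper[OF assms(1) U(1) hU(1)[OF that(1)] hU(1)[OF that(2)]] .
      then have "d (h x) (h y) \<le> C * l" using U(4) by linarith
      then show ?thesis unfolding Dk_def using lpos by (simp add: divide_le_eq)
    qed
    have Dge: "0 \<le> Dk x y" if "x\<in>X" "y\<in>X" for x y
      unfolding Dk_def using lpos hX[OF that(1)] hX[OF that(2)] by simp
    have Dsym: "Dk x y = Dk y x" if "x\<in>X" "y\<in>X" for x y
      unfolding Dk_def using commute by simp
    have Dzero: "Dk x x = 0" if "x \<in> X" for x unfolding Dk_def using hX[OF that] by simp
    have Dpos': "0 < Dk x y" if "x\<in>X" "y\<in>X" "x \<noteq> y" for x y
    proof -
      have "h x \<noteq> h y" using hU(2)[OF that(1)] hU(2)[OF that(2)] that(3) by metis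
      then have "d (h x) (h y) > 0" using hX[OF that(1)] hX[OF that(2)] by simp
      then show ?thesis unfolding Dk_def using lpos by simp
    qed
    have Dtri: "Dk x y \<le> Dk x w + Dk w y" if "x\<in>X" "y\<in>X" "w\<in>X" for x y w
    proof -
      have "d (h x) (h y) \<le> d (h x) (h w) + d (h w) (h y)"
        using hX[OF that(1)] hX[OF that(3)] hX[OF that(2)] by (rule triangle)
      then have "d (h x) (h y) / l \<le> (d (h x) (h w) + d (h w) (h y)) / l"
        using lpos by (simp add: divide_right_mono)
      then show ?thesis unfolding Dk_def by (simp add: add_divide_distrib)
    qed
    have Dqs': "Dk x y / Dk x w \<le> ?E (d x y / d x w)" if "x\<in>X" "y\<in>X" "w\<in>X" "x \<noteq> w" for x y w
    proof -
      have "Dk x y / Dk x w = d (h x) (h y) / d (h x) (h w)" unfolding Dk_def using lpos by simp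
      then show ?thesis using hqs[OF that] by simp
    qed
    have psiK: "\<psi> x \<in> K" if "x \<in> X" for x
    proof -
      have GZ: "G (h x) \<in> Z" using G(1) hB[OF that] by blast
      have "\<bar>dZ (G (q n)) (G (h x)) - d (q n) (h x) / l\<bar> < ek" using bspec[OF bspec[OF G(3) qB] hB[OF that]] .
      then have "dZ z (G (h x)) < d (q n) (h x) / l + ek" using G(2) by (simp add: abs_less_iff)
      then have "dZ z (G (h x)) \<le> 3" using hd[OF that] ek(2) by linarith
      then show ?thesis unfolding \<psi>_def K_def using that GZ zZ by simp
    qed
    have uvex: "\<exists>u\<in>X. \<exists>v\<in>X. 1/(2*C) \<le> Dk u v"
    proof -
      have "l/(2*C) < l/C" using lpos rC by (simp add: divide_strict_left_mono)
      then have "l/(2*C) < mdiam d U" using U(3) by linarith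
      then obtain u' v' where uv': "u' \<in> U" "v' \<in> U" "l/(2*C) < d u' v'"
        using mdiam_less[of "l/(2*C)" d U] U(2) by blast
      have hf: "h (f u') = u'" "h (f v') = v'" unfolding h_def using injf uv' by (auto intro: inv_into_f_f)
      have fX: "f u' \<in> X" "f v' \<in> X" using f(2) uv' by auto
      have "l/(2*C) / l \<le> d u' v' / l" using uv'(3) lpos by (intro divide_right_mono) auto
      moreover have "l/(2*C) / l = 1/(2*C)" using lpos by simp
      ultimately have "1/(2*C) \<le> Dk (f u') (f v')" unfolding Dk_def using hf by simp
      then show ?thesis using fX by blast
    qed
    have "Good k \<psi> Dk" unfolding Good_def
    proof (intro conjI)
      show "\<psi> \<in> extensional X" unfolding \<psi>_def by simp
      show "\<forall>x\<in>X. \<psi> x \<in> K" using psiK by blast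
      show "\<forall>x\<in>X. \<forall>y\<in>X. \<bar>dZ (\<psi> x) (\<psi> y) - Dk x y\<bar> < 1/(real k+1)" using dist_approx unfolding ek_def by blast
      show "\<forall>x\<in>X. \<forall>y\<in>X. \<forall>w\<in>X. x \<noteq> w \<longrightarrow> Dk x y / Dk x w \<le> ?E (d x y / d x w)" using Dqs' by blast
      show "\<forall>x\<in>X. \<forall>y\<in>X. 0 \<le> Dk x y \<and> Dk x y \<le> C \<and> Dk x y = Dk y x \<and> (x \<noteq> y \<longrightarrow> 0 < Dk x y) \<and> (x = y \<longrightarrow> Dk x y = 0)"
        using Dge Dle Dsym Dpos' Dzero by blast
      show "\<forall>x\<in>X. \<forall>y\<in>X. \<forall>w\<in>X. Dk x y \<le> Dk x w + Dk w y" using Dtri by blast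
      show "\<exists>u\<in>X. \<exists>v\<in>X. 1/(2*C) \<le> Dk u v" by (fact uvex)
    qed
    then show ?thesis by blast
  qed
  obtain \<Psi> DK where GD: "\<And>k. Good k (\<Psi> k) (DK k)" using exGood by metis
  have G1: "\<Psi> k \<in> extensional X" for k
    using GD[of k, unfolded Good_def, THEN conjunct1] .
  have G2: "\<forall>x\<in>X. \<Psi> k x \<in> K" for k
    using GD[of k, unfolded Good_def, THEN conjunct2, THEN conjunct1] .
  have PS: "\<And>k. \<Psi> k \<in> extensional X \<and> (\<forall>x\<in>X. \<Psi> k x \<in> K)" using G1 G2 by blast
  obtain \<phi> where phiK: "\<forall>x\<in>X. \<phi> x \<in> K" and clu: "\<forall>m x y w e. x\<in>X \<longrightarrow> y\<in>X \<longrightarrow> w\<in>X \<longrightarrow> e>0 \<longrightarrow>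
      (\<exists>k\<ge>m. dZ (\<Psi> k x) (\<phi> x) < e \<and> dZ (\<Psi> k y) (\<phi> y) < e \<and> dZ (\<Psi> k w) (\<phi> w) < e)"
    using cluster_point[where \<Psi>=\<Psi> and X=X, OF MZ cK PS] by blast
  have G3: "\<forall>x\<in>X. \<forall>y\<in>X. \<bar>dZ (\<Psi> k x) (\<Psi> k y) - DK k x y\<bar> < 1/(real k+1)" for k
    using GD[of k, unfolded Good_def, THEN conjunct2, THEN conjunct2, THEN conjunct1] .
  have G4: "\<forall>x\<in>X. \<forall>y\<in>X. \<forall>w\<in>X. x \<noteq> w \<longrightarrow> DK k x y / DK k x w \<le> ?E (d x y / d x w)" for k
    using GD[of k, unfolded Good_def, THEN conjunct2, THEN conjunct2, THEN conjunct2, THEN conjunct1] .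
  have G5: "\<forall>x\<in>X. \<forall>y\<in>X. 0 \<le> DK k x y \<and> DK k x y \<le> C \<and> DK k x y = DK k y x \<and> (x \<noteq> y \<longrightarrow> 0 < DK k x y) \<and> (x = y \<longrightarrow> DK k x y = 0)" for k
    using GD[of k, unfolded Good_def, THEN conjunct2, THEN conjunct2, THEN conjunct2, THEN conjunct2, THEN conjunct1] .
  have G6: "\<forall>x\<in>X. \<forall>y\<in>X. \<forall>w\<in>X. DK k x y \<le> DK k x w + DK k w y" for k
    using GD[of k, unfolded Good_def, THEN conjunct2, THEN conjunct2, THEN conjunct2, THEN conjunct2, THEN conjunct2, THEN conjunct1] .
  have G7: "\<exists>u\<in>X. \<exists>v\<in>X. 1/(2*C) \<le> DK k u v" for k
    using GD[of k, unfolded Good_def, THEN conjunct2, THEN conjunct2, THEN conjunct2, THEN conjunct2, THEN conjunct2, THEN conjunct2] .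
  have KZ: "K \<subseteq> Z" unfolding K_def by (rule Z.mcball_subset_mspace)
  have PsiZ: "\<Psi> k x \<in> Z" if "x \<in> X" for k x using G2[of k] that KZ by blast
  have phiZ: "\<phi> x \<in> Z" if "x \<in> X" for x using phiK that KZ by blast
  have appr1: "\<bar>dZ (\<Psi> k x) (\<Psi> k y) - DK k x y\<bar> < 1/(real k+1)" if "x \<in> X" "y \<in> X" for k x y
    using bspec[OF bspec[OF G3[of k] that(1)] that(2)] .
  have appr: "\<exists>k. \<bar>dZ (\<phi> x) (\<phi> y) - DK k x y\<bar> < e \<and> \<bar>dZ (\<phi> x) (\<phi> w) - DK k x w\<bar> < e"
    if xyw: "x \<in> X" "y \<in> X" "w \<in> X" and e: "e > 0" for x y w e
  proof -
    have e3: "e/3 > 0" using e by simp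
    obtain m where m: "inverse (real (Suc m)) < e/3" using reals_Archimedean[OF e3] by blast
    have "\<exists>k\<ge>m. dZ (\<Psi> k x) (\<phi> x) < e/3 \<and> dZ (\<Psi> k y) (\<phi> y) < e/3 \<and> dZ (\<Psi> k w) (\<phi> w) < e/3"
      using spec[OF spec[OF spec[OF spec[OF spec[OF clu, of m], of x], of y], of w], of "e/3"] xyw e3 by simp
    then obtain k where k: "k \<ge> m" "dZ (\<Psi> k x) (\<phi> x) < e/3" "dZ (\<Psi> k y) (\<phi> y) < e/3" "dZ (\<Psi> k w) (\<phi> w) < e/3"
      by blast
    have km: "1/(real k+1) < e/3"
    proof -
      have "1/(real k+1) \<le> 1/(real m+1)" using k(1) by (simp add: frac_le)
      moreover have "inverse (real (Suc m)) = 1/(real m+1)" by (simp add: inverse_eq_divide)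
      ultimately show ?thesis using m by linarith
    qed
    have t1: "\<bar>dZ (\<phi> x) (\<phi> v) - dZ (\<Psi> k x) (\<Psi> k v)\<bar> < 2*e/3" if "v \<in> X" "dZ (\<Psi> k v) (\<phi> v) < e/3" for v
    proof -
      have "\<bar>dZ (\<phi> x) (\<phi> v) - dZ (\<Psi> k x) (\<Psi> k v)\<bar> \<le> dZ (\<phi> x) (\<Psi> k x) + dZ (\<phi> v) (\<Psi> k v)"
        using Z.dist_diff[OF phiZ[OF xyw(1)] phiZ[OF that(1)] PsiZ[OF xyw(1)] PsiZ[OF that(1)]] .
      moreover have "dZ (\<phi> x) (\<Psi> k x) = dZ (\<Psi> k x) (\<phi> x)" by (rule Z.commute)
      moreover have "dZ (\<phi> v) (\<Psi> k v) = dZ (\<Psi> k v) (\<phi> v)" by (rule Z.commute)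
      ultimately show ?thesis using k(2) that(2) by linarith
    qed
    have a1: "\<bar>dZ (\<phi> x) (\<phi> y) - DK k x y\<bar> < e"
      using t1[OF xyw(2) k(3)] appr1[OF xyw(1) xyw(2), of k] km by linarith
    have a2: "\<bar>dZ (\<phi> x) (\<phi> w) - DK k x w\<bar> < e"
      using t1[OF xyw(3) k(4)] appr1[OF xyw(1) xyw(3), of k] km by linarith
    show ?thesis using a1 a2 by blast
  qed
  have G5': "0 \<le> DK k x y \<and> DK k x y \<le> C \<and> DK k x y = DK k y x \<and> (x \<noteq> y \<longrightarrow> 0 < DK k x y) \<and> (x = y \<longrightarrow> DK k x y = 0)"
    if "x \<in> X" "y \<in> X" for k x y
    using bspec[OF bspec[OF G5[of k] that(1)] that(2)] .
  have Dpos: "0 < DK k x y" "DK k x y \<le> C" if "x \<in> X" "y \<in> X" "x \<noteq> y" for k x y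
    using G5'[OF that(1,2), of k] that(3) by simp_all
  have Dqs: "DK k x y \<le> ?E (d x y / d x w) * DK k x w" if "x \<in> X" "y \<in> X" "w \<in> X" "x \<noteq> w" for k x y w
  proof -
    have "DK k x y / DK k x w \<le> ?E (d x y / d x w)"
      using bspec[OF bspec[OF bspec[OF G4[of k] that(1)] that(2)] that(3)] that(4) by simp
    then show ?thesis using Dpos[of x w k] that by (simp add: divide_le_eq)
  qed
  define c where "c x w = 1 / (4 * C * ?E (2*R / d x w))" for x w
  have lowb: "c x w \<le> DK k x w" if "x \<in> X" "w \<in> X" "x \<noteq> w" for k x w
  proof -
    obtain u v where uv: "u \<in> X" "v \<in> X" "1/(2*C) \<le> DK k u v" using G7[of k] by blast
    have tri: "DK k u v \<le> DK k u x + DK k x v"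
      using bspec[OF bspec[OF bspec[OF G6[of k] uv(1)] uv(2)] that(1)] .
    have sym: "DK k u x = DK k x u" using G5'[OF uv(1) that(1), of k] by simp
    have half: "1/(2*C) = 1/(4*C) + 1/(4*C)" by (simp add: field_simps)
    obtain w' where w': "w' \<in> X" "1/(4*C) \<le> DK k x w'"
    proof (cases "1/(4*C) \<le> DK k x u")
      case True
      show ?thesis by (rule that[OF uv(1) True])
    next
      case False
      then have "1/(4*C) \<le> DK k x v" using tri sym uv(3) half by linarith
      show ?thesis by (rule that[OF uv(2) \<open>1/(4*C) \<le> DK k x v\<close>])
    qed
    have dxw: "d x w > 0" using that by simp
    define Q where "Q = ?E (2*R / d x w)"
    have Qpos: "Q > 0" unfolding Q_def using DP(2) Rpos dxw by simp
    have Dxw: "0 < DK k x w" using Dpos[OF that(1,2,3)] by simp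
    have "DK k x w' \<le> ?E (d x w' / d x w) * DK k x w"
    proof (cases "x = w'")
      case True
      then have "DK k x w' = 0" using G5'[OF that(1) that(1), of k] by simp
      moreover have "?E (d x w' / d x w) * DK k x w \<ge> 0" using DP(1)[of "d x w' / d x w"] dxw Dxw by simp
      ultimately show ?thesis by simp
    next
      case False
      show ?thesis using Dqs[OF that(1) w'(1) that(2) that(3)] .
    qed
    also have "\<dots> \<le> Q * DK k x w"
    proof (rule mult_right_mono)
      have "d x w' \<le> 2*R" using dbound[OF that(1) w'(1)] .
      then have "d x w' / d x w \<le> 2*R / d x w" using dxw by (simp add: divide_right_mono)
      then show "?E (d x w' / d x w) \<le> Q" unfolding Q_def using DP(3) dxw by simp
      show "0 \<le> DK k x w" using Dxw by simp
    qed
    finally have "1/(4*C) \<le> Q * DK k x w" using w'(2) by linarith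
    then have "1/(4*C) \<le> DK k x w * Q" by (simp add: mult.commute)
    then have "1/(4*C) / Q \<le> DK k x w" by (subst pos_divide_le_eq[OF Qpos])
    moreover have "c x w = 1/(4*C) / Q" unfolding c_def Q_def by simp
    ultimately show ?thesis by simp
  qed
  have main: "c x w \<le> dZ (\<phi> x) (\<phi> w) \<and> dZ (\<phi> x) (\<phi> y) \<le> ?E (d x y / d x w) * dZ (\<phi> x) (\<phi> w)
      \<and> dZ (\<phi> x) (\<phi> y) \<le> ?E (d x y / d x w) * C"
    if xyw: "x \<in> X" "y \<in> X" "w \<in> X" "x \<noteq> w" for x y w
  proof -
    have Q: "?E (d x y / d x w) \<ge> 0" using DP(1) xyw by simp
    have ap: "\<exists>a b. \<bar>dZ (\<phi> x) (\<phi> y) - a\<bar> < e \<and> \<bar>dZ (\<phi> x) (\<phi> w) - b\<bar> < e \<and>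
       a \<le> ?E (d x y / d x w) * b \<and> c x w \<le> b \<and> b \<le> C" if ep: "e > 0" for e
    proof -
      obtain k where k: "\<bar>dZ (\<phi> x) (\<phi> y) - DK k x y\<bar> < e" "\<bar>dZ (\<phi> x) (\<phi> w) - DK k x w\<bar> < e"
        using appr[OF xyw(1-3) ep] by blast
      show ?thesis
        by (intro exI[of _ "DK k x y"] exI[of _ "DK k x w"] conjI k Dqs[OF xyw] lowb[OF xyw(1,3,4)] Dpos[OF xyw(1,3,4)])
    qed
    show ?thesis using limit_ineq[OF ap Q] by blast
  qed
  have cpos: "c x w > 0" if "x \<in> X" "w \<in> X" "x \<noteq> w" for x w
  proof -
    have "2*R / d x w > 0" using Rpos that by simp
    then show ?thesis using DP(2) rC unfolding c_def by simp
  qed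
  have inj: "inj_on \<phi> X"
  proof (rule inj_onI)
    fix x w assume "x \<in> X" "w \<in> X" "\<phi> x = \<phi> w"
    show "x = w"
    proof (rule ccontr)
      assume "x \<noteq> w"
      then have "c x w \<le> dZ (\<phi> x) (\<phi> w)" using main[of x x w] \<open>x \<in> X\<close> \<open>w \<in> X\<close> by blast
      moreover have "c x w > 0" using cpos[of x w] \<open>x \<noteq> w\<close> \<open>x \<in> X\<close> \<open>w \<in> X\<close> by blast
      ultimately have "0 < dZ (\<phi> x) (\<phi> w)" by linarith
      then show False using \<open>\<phi> x = \<phi> w\<close> phiZ[OF \<open>w \<in> X\<close>] by simp
    qed
  qed
  have other: "\<exists>w\<in>X. w \<noteq> x" for x using a12 by (cases "x = a1") auto
  have cont: "continuous_map mtopology Z.mtopology \<phi>"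
    unfolding metric_continuous_map[OF MZ]
  proof (intro conjI ballI allI impI)
    show "\<phi> ` X \<subseteq> Z" using phiZ by blast
    fix a and e :: real assume a: "a \<in> X" and e: "e > 0"
    obtain w where w: "w \<in> X" "w \<noteq> a" using other by blast
    have rho: "d a w > 0" using a w by simp
    obtain \<delta>0 where d0: "\<delta>0 > 0" "\<forall>t. 0 \<le> t \<and> t < \<delta>0 \<longrightarrow> ?E t < e / C"
      using DP(4)[of "e/C"] e rC by auto
    show "\<exists>\<delta>>0. \<forall>x. x \<in> X \<and> d a x < \<delta> \<longrightarrow> dZ (\<phi> a) (\<phi> x) < e"
    proof (intro exI[of _ "\<delta>0 * d a w"] conjI allI impI)
      show "\<delta>0 * d a w > 0" using d0 rho by simp
      fix x assume x: "x \<in> X \<and> d a x < \<delta>0 * d a w"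
      then have "d a x / d a w < \<delta>0" using rho by (simp add: divide_less_eq)
      then have "?E (d a x / d a w) < e / C" using d0 by simp
      then have "?E (d a x / d a w) * C < e" using rC by (simp add: less_divide_eq)
      moreover have "dZ (\<phi> a) (\<phi> x) \<le> ?E (d a x / d a w) * C" using main[of a x w] a x w by auto
      ultimately show "dZ (\<phi> a) (\<phi> x) < e" by linarith
    qed
  qed
  have sub: "subtopology mtopology X = mtopology" using subtopology_topspace[of mtopology] by simp
  have hom: "homeomorphic_map (subtopology mtopology X) (subtopology Z.mtopology (\<phi> ` X)) \<phi>"
    unfolding sub
  proof (rule continuous_imp_homeomorphic_map)
    show "continuous_map mtopology (subtopology Z.mtopology (\<phi> ` X)) \<phi>"
      using cont by (simp add: continuous_map_in_subtopology)
    show "compact_space mtopology" by (fact cX)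
    show "Hausdorff_space (subtopology Z.mtopology (\<phi> ` X))"
      by (rule Hausdorff_space_subtopology[OF Z.Hausdorff_space_mtopology])
    show "\<phi> ` topspace mtopology = topspace (subtopology Z.mtopology (\<phi> ` X))"
      using phiZ by auto
    show "inj_on \<phi> (topspace mtopology)" using inj by simp
  qed
  show ?thesis
  proof (intro exI[of _ \<phi>])
    show "quasisymmetric_on X d Z dZ ?E X \<phi>"
      unfolding quasisymmetric_on_def
    proof (intro conjI ballI impI)
      show "X \<subseteq> X" by simp
      show "\<phi> ` X \<subseteq> Z" using phiZ by blast
      show "homeomorphic_map (subtopology mtopology X) (subtopology Z.mtopology (\<phi> ` X)) \<phi>" by (fact hom)
      fix x y w assume xyw: "x \<in> X" "y \<in> X" "w \<in> X" "x \<noteq> w"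
      have "0 < dZ (\<phi> x) (\<phi> w)" using main[OF xyw] cpos[OF xyw(1,3,4)] by linarith
      then show "dZ (\<phi> x) (\<phi> y) / dZ (\<phi> x) (\<phi> w) \<le> ?E (d x y / d x w)"
        using main[OF xyw] by (simp add: divide_le_eq)
    qed
  qed
qed

end
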